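(* Let $f\in\mathcal{F}$, let $A$ be a finite subset of $f^{-1}(E)$ and let $b\in\mathbb{C}$. Then for every $\varepsilon>0$ there exists $g\in\mathcal{F}(f,A)$ such that $d_{\mathcal{F}}(f,g)<\varepsilon$ and $g(b)\in E$.
   Context: $\mathcal{F}$ is a Fréchet space of entire maps containing all complex polynomial maps, whose topology is finer than the topology of local uniform convergence on $\mathbb{C}$; $(\|\cdot\|_j)_{j\ge0}$ is a sequence of seminorms defining its topology and $d_{\mathcal{F}}(f,g)=\sum_{j\ge0}2^{-j}\min\{1,\|f-g\|_j\}$. $E$ is a countable dense subset of $\mathbb{C}$. For $f\in\mathcal{F}$ and $A\subseteq\mathbb{C}$, $\mathcal{F}(f,A)=\{g\in\mathcal{F}: g|_A=f|_A \text{ and } g'|_A=f'|_A\}$. *)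

theory Defs
  imports "HOL-Analysis.Analysis" "HOL-Computational_Algebra.Polynomial"
begin

text \<open>A Frechet space of entire maps: a complex vector space FF of entire functions,
  containing all polynomial maps, with a countable family of seminorms sn j
  defining a Hausdorff, complete (metrizable) locally convex topology which is finer
  than the topology of local uniform convergence on the complex plane.\<close>

definition frechet_entire ::
  "(complex \<Rightarrow> complex) set \<Rightarrow> (nat \<Rightarrow> (complex \<Rightarrow> complex) \<Rightarrow> real) \<Rightarrow> bool" where
  "frechet_entire FF sn \<longleftrightarrow>
     (\<forall>f\<in>FF. f holomorphic_on UNIV) \<and>
     (\<lambda>z. 0) \<in> FF \<and>
     (\<forall>f\<in>FF. \<forall>g\<in>FF. (\<lambda>z. f z + g z) \<in> FF) \<and>
     (\<forall>c. \<forall>f\<in>FF. (\<lambda>z. c * f z) \<in> FF) \<and>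
     (\<forall>p. (\<lambda>z. poly p z) \<in> FF) \<and>
     (\<forall>j. \<forall>f\<in>FF. 0 \<le> sn j f) \<and>
     (\<forall>j. \<forall>f\<in>FF. \<forall>g\<in>FF. sn j (\<lambda>z. f z + g z) \<le> sn j f + sn j g) \<and>
     (\<forall>j c. \<forall>f\<in>FF. sn j (\<lambda>z. c * f z) = norm c * sn j f) \<and>
     (\<forall>f\<in>FF. (\<forall>j. sn j f = 0) \<longrightarrow> f = (\<lambda>z. 0)) \<and>
     (\<forall>u. (\<forall>n. u n \<in> FF) \<longrightarrow>
          (\<forall>j. \<forall>e>0. \<exists>N. \<forall>m\<ge>N. \<forall>n\<ge>N. sn j (\<lambda>z. u m z - u n z) < e) \<longrightarrow>
          (\<exists>g\<in>FF. \<forall>j. (\<lambda>n. sn j (\<lambda>z. u n z - g z)) \<longlonglongrightarrow> 0)) \<and>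
     (\<forall>K. compact K \<longrightarrow> (\<exists>N C. \<forall>f\<in>FF. \<forall>z\<in>K. norm (f z) \<le> C * (\<Sum>j\<le>N. sn j f)))"

definition dF :: "(nat \<Rightarrow> (complex \<Rightarrow> complex) \<Rightarrow> real) \<Rightarrow> (complex \<Rightarrow> complex) \<Rightarrow> (complex \<Rightarrow> complex) \<Rightarrow> real" where
  "dF sn f g = (\<Sum>j. (1/2)^j * min 1 (sn j (\<lambda>z. f z - g z)))"

definition interp_class ::
  "(complex \<Rightarrow> complex) set \<Rightarrow> (complex \<Rightarrow> complex) \<Rightarrow> complex set \<Rightarrow> (complex \<Rightarrow> complex) set" where
  "interp_class FF f A = {g\<in>FF. \<forall>a\<in>A. g a = f a \<and> deriv g a = deriv f a}"

end

theory Submission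
  imports Defs
begin


lemma fe1: "frechet_entire FF sn \<Longrightarrow> \<forall>f\<in>FF. f holomorphic_on UNIV"
  unfolding frechet_entire_def by (elim conjE) assumption
lemma fe3: "frechet_entire FF sn \<Longrightarrow> \<forall>f\<in>FF. \<forall>g\<in>FF. (\<lambda>z. f z + g z) \<in> FF"
  unfolding frechet_entire_def by (elim conjE) assumption
lemma fe4: "frechet_entire FF sn \<Longrightarrow> \<forall>c. \<forall>f\<in>FF. (\<lambda>z. c * f z) \<in> FF"
  unfolding frechet_entire_def by (elim conjE) assumption
lemma fe5: "frechet_entire FF sn \<Longrightarrow> \<forall>p. (\<lambda>z. poly p z) \<in> FF"
  unfolding frechet_entire_def by (elim conjE) assumption
lemma fe6: "frechet_entire FF sn \<Longrightarrow> \<forall>j. \<forall>f\<in>FF. 0 \<le> sn j f"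
  unfolding frechet_entire_def by (elim conjE) assumption
lemma fe8: "frechet_entire FF sn \<Longrightarrow> \<forall>j c. \<forall>f\<in>FF. sn j (\<lambda>z. c * f z) = norm c * sn j f"
  unfolding frechet_entire_def by (elim conjE) assumption
lemma fe_hol: "frechet_entire FF sn \<Longrightarrow> f \<in> FF \<Longrightarrow> f holomorphic_on UNIV"
  using fe1 by blast
lemma fe_add: "frechet_entire FF sn \<Longrightarrow> f \<in> FF \<Longrightarrow> g \<in> FF \<Longrightarrow> (\<lambda>z. f z + g z) \<in> FF"
  using fe3 by blast
lemma fe_polyc: "frechet_entire FF sn \<Longrightarrow> (\<lambda>z. c * poly p z) \<in> FF"
proof -
  assume a: "frechet_entire FF sn"
  have "(\<lambda>z. poly p z) \<in> FF" using fe5[OF a] by blast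
  then show ?thesis using fe4[OF a] by blast
qed
lemma fe_nn: "frechet_entire FF sn \<Longrightarrow> f \<in> FF \<Longrightarrow> 0 \<le> sn j f"
  using fe6 by blast
lemma fe_sc: "frechet_entire FF sn \<Longrightarrow> f \<in> FF \<Longrightarrow> sn j (\<lambda>z. c * f z) = norm c * sn j f"
  using fe8 by blast
lemma fdiff: "f holomorphic_on UNIV \<Longrightarrow> f field_differentiable at z"
  using holomorphic_on_imp_differentiable_at by blast
lemma qzero: "finite A \<Longrightarrow> (a::complex) \<in> A \<Longrightarrow> poly (\<Prod>a\<in>A. [:-a, 1:]) a = 0"
  unfolding poly_prod by (rule prod_zero) (auto intro!: bexI[of _ a])
lemma pdiff: "(\<lambda>z. c * poly p z) field_differentiable at a"
  by (metis field_differentiable_def poly_DERIV DERIV_cmult)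
lemma clos_app: "(e::complex) \<in> closure E \<Longrightarrow> d > 0 \<Longrightarrow> \<exists>x\<in>E. dist x e < d"
  using closure_approachable by blast

lemma dF_small:
  fixes sn :: "nat \<Rightarrow> (complex \<Rightarrow> complex) \<Rightarrow> real"
  assumes fe: "frechet_entire FF sn" and h: "h \<in> FF" and e: "\<epsilon> > 0"
  shows "\<exists>\<delta>>0. \<forall>c. norm c < \<delta> \<longrightarrow>
           (\<Sum>j. (1/2::real)^j * min 1 (sn j (\<lambda>z. c * h z))) < \<epsilon>"
proof -
  have nn: "\<And>j. 0 \<le> sn j h" and sc: "\<And>j c. sn j (\<lambda>z. c * h z) = norm c * sn j h"
    using fe_nn[OF fe h] fe_sc[OF fe h] by auto
  obtain k where k: "(1/2::real)^k < \<epsilon>/4"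
    using real_arch_pow_inv[of "\<epsilon>/4" "1/2::real"] e by auto
  define S where "S = (\<Sum>j<k. sn j h)"
  have S0: "S \<ge> 0" unfolding S_def using nn by (simp add: sum_nonneg)
  define \<delta> where "\<delta> = \<epsilon> / (2 * (S + 1))"
  have dpos: "\<delta> > 0" unfolding \<delta>_def using S0 e by simp
  show ?thesis
  proof (intro exI[of _ \<delta>] conjI allI impI dpos)
    fix c :: complex assume c: "norm c < \<delta>"
    define t where "t = (\<lambda>j. (1/2::real)^j * min 1 (sn j (\<lambda>z. c * h z)))"
    have t0: "\<And>j. 0 \<le> t j" unfolding t_def sc using nn by simp
    have tb: "\<And>j. t j \<le> (1/2)^j" unfolding t_def by (simp add: mult_left_le)
    have sumt: "summable t"
      by (rule summable_comparison_test'[where g="\<lambda>j. (1/2::real)^j"]) (use t0 tb in auto)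
    have split: "suminf t = (\<Sum>n. t (n + k)) + (\<Sum>i<k. t i)"
      using suminf_split_initial_segment[OF sumt] .
    have tail: "(\<Sum>n. t (n + k)) \<le> (\<Sum>n. (1/2::real)^(n+k))"
      apply (rule suminf_le)
      using tb apply simp
      using sumt summable_iff_shift apply blast
      by (simp add: power_add summable_mult2)
    have geo: "(\<Sum>n. (1/2::real)^(n+k)) = 2 * (1/2)^k"
    proof -
      have "(\<Sum>n. (1/2::real)^(n+k)) = (\<Sum>n. (1/2::real)^n * (1/2)^k)" by (simp add: power_add)
      also have "\<dots> = (\<Sum>n. (1/2::real)^n) * (1/2)^k" by (rule suminf_mult2[symmetric]) simp
      also have "\<dots> = 2 * (1/2)^k" using suminf_geometric[of "1/2::real"] by simp
      finally show ?thesis .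
    qed
    have init: "(\<Sum>i<k. t i) \<le> (\<Sum>i<k. norm c * sn i h)"
    proof (rule sum_mono)
      fix i
      have "t i \<le> 1 * min 1 (sn i (\<lambda>z. c * h z))" unfolding t_def
        by (rule mult_right_mono) (use nn sc in \<open>auto simp: power_le_one\<close>)
      also have "\<dots> \<le> norm c * sn i h" using sc by simp
      finally show "t i \<le> norm c * sn i h" .
    qed
    have "(\<Sum>i<k. norm c * sn i h) = norm c * S" unfolding S_def by (simp add: sum_distrib_left)
    also have "\<dots> \<le> \<delta> * S" using c S0 by (simp add: mult_right_mono)
    also have "\<dots> < \<epsilon>/2"
    proof -
      have "\<delta> * S = \<epsilon> * S / (2 * (S+1))" unfolding \<delta>_def by simp
      also have "\<dots> < \<epsilon> / 2" using S0 e by (simp add: field_simps)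
      finally show ?thesis .
    qed
    finally have "(\<Sum>i<k. t i) < \<epsilon>/2" using init by linarith
    with split tail geo k show "suminf t < \<epsilon>" unfolding t_def by linarith
  qed
qed

theorem lemma2p3:
  fixes FF :: "(complex \<Rightarrow> complex) set"
    and sn :: "nat \<Rightarrow> (complex \<Rightarrow> complex) \<Rightarrow> real"
    and E :: "complex set" and f :: "complex \<Rightarrow> complex"
    and A :: "complex set" and b :: complex and \<epsilon> :: real
  assumes "frechet_entire FF sn"
    and "countable E" and "closure E = UNIV"
    and "f \<in> FF"
    and "finite A" and "A \<subseteq> f -` E"
    and "\<epsilon> > 0"
  shows "\<exists>g\<in>interp_class FF f A. dF sn f g < \<epsilon> \<and> g b \<in> E"
proof -
  note fe = assms(1)
  have fd: "\<And>z. f field_differentiable at z" using fdiff[OF fe_hol[OF fe assms(4)]] .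
  define q where "q = (\<Prod>a\<in>A. [:-a, 1:])"
  define p where "p = q * q"
  have pFF: "\<And>c. (\<lambda>z. c * poly p z) \<in> FF" using fe_polyc[OF fe] .
  have pF: "(\<lambda>z. poly p z) \<in> FF" using pFF[of 1] by simp
  have qa: "\<And>a. a \<in> A \<Longrightarrow> poly q a = 0"
    unfolding q_def using qzero assms(5) by blast
  have dp: "\<And>a. a \<in> A \<Longrightarrow> poly (pderiv p) a = 0"
    unfolding p_def pderiv_mult using qa by simp
  obtain \<delta> where dpos: "\<delta> > 0" and dsm:
    "\<And>c. norm c < \<delta> \<Longrightarrow> (\<Sum>j. (1/2::real)^j * min 1 (sn j (\<lambda>z. c * poly p z))) < \<epsilon>"
    using dF_small[OF fe pF assms(7)] by blast
  have zero_sn: "\<And>j. sn j (\<lambda>z. 0) = 0"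
  proof -
    fix j
    have "sn j (\<lambda>z. 0 * poly p z) = norm (0::complex) * sn j (\<lambda>z. 1 * poly p z)"
      using fe_sc[OF fe pFF[of 1], of j 0] by simp
    then show "sn j (\<lambda>z. 0) = 0" by (simp del: mult_1)
  qed
  show ?thesis
  proof (cases "b \<in> A")
    case True
    have "dF sn f f = 0" unfolding dF_def by (simp add: zero_sn)
    then show ?thesis using True assms(4,6,7) unfolding interp_class_def by (intro bexI[of _ f]) auto
  next
    case False
    have qb: "poly q b \<noteq> 0" unfolding q_def poly_prod using assms(5) False by auto
    define pb where "pb = poly p b"
    have pb0: "pb \<noteq> 0" unfolding pb_def p_def using qb by simp
    have "f b \<in> closure E" using assms(3) by simp
    moreover have "\<delta> * norm pb > 0" using pb0 dpos by simp
    ultimately obtain e where eE: "e \<in> E" and de: "dist e (f b) < \<delta> * norm pb"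
      using clos_app by blast
    define c where "c = (e - f b) / pb"
    define g where "g = (\<lambda>z. f z + c * poly p z)"
    have gFF: "g \<in> FF" unfolding g_def using fe_add[OF fe assms(4) pFF] .
    have gb: "g b = e" unfolding g_def c_def pb_def[symmetric] using pb0 by simp
    have cn: "norm (-c) < \<delta>" unfolding c_def using de pb0
      by (simp add: norm_divide dist_norm divide_less_eq)
    have fg: "(\<lambda>z. f z - g z) = (\<lambda>z. (-c) * poly p z)" unfolding g_def by auto
    have dfg: "dF sn f g < \<epsilon>" unfolding dF_def fg using dsm[OF cn] .
    have ga: "g a = f a \<and> deriv g a = deriv f a" if "a \<in> A" for a
    proof
      show "g a = f a" unfolding g_def using qa[OF that] p_def by simp
      have pd: "(\<lambda>z. c * poly p z) field_differentiable at a"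
        by (rule pdiff)
      have "deriv (\<lambda>z. c * poly p z) a = c * poly (pderiv p) a"
        by (rule DERIV_imp_deriv) (rule DERIV_cmult, rule poly_DERIV)
      then show "deriv g a = deriv f a" unfolding g_def
        using deriv_add[OF fd pd] dp[OF that] by simp
    qed
    show ?thesis using gFF gb eE dfg ga unfolding interp_class_def by auto
  qed
qed

end
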